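(* Let $\widehat\Sigma$ be an integral $\mathbb Q$-affine polyhedral complex with support $\mathbb R^N$ admitting a strictly convex function $\widehat H\in\operatorname{Rat}(\widehat\Sigma)$, and let $\Sigma'$ be a subcomplex of $\widehat\Sigma$. Then every facewise affine function $F$ on $\widehat\Sigma$ can be written as $F=H_1-H_2$ with $H_1,H_2$ strictly convex facewise affine functions on $\widehat\Sigma$. Moreover, if the restriction of $F$ to $|\Sigma'|$ belongs to $\operatorname{Rat}(\Sigma')$, then $H_1,H_2$ can be chosen with restrictions to $|\Sigma'|$ belonging to $\operatorname{Rat}(\Sigma')$.
   Context: An integral $\mathbb Q$-affine polyhedral complex in $\mathbb R^N$ is a finite collection of polyhedra $\{u:L_i(u)\ge0\}$ with $L_i(u)=\langle m_i,u\rangle+\gamma_i$, $m_i\in\mathbb Z^N$, $\gamma_i\in\mathbb Q$, closed under faces, any two meeting in a common face. A function on $|\Sigma|$ is facewise (integral $\mathbb Q$-)affine if its restriction to each cell is the restriction of an (integral $\mathbb Q$-)affine function on $\mathbb R^N$. $\operatorname{Rat}(\Sigma)$ is the set of $\infty$ and facewise integral $\mathbb Q$-affine functions on $\Sigma$ having the same slope near infinity along any two parallel rays (unbounded one-dimensional cells with the same direction) of $\Sigma$. A facewise affine $H$ is convex if for each cell $\sigma$ there is an affine $L_\sigma$ on $\mathbb R^N$ with $H=L_\sigma$ on $\sigma$ and $H-L_\sigma\ge0$ on $\eta\setminus\sigma$ for every cell $\eta\supseteq\sigma$; strictly convex if these inequalities are strict. *)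

theory Defs
  imports "HOL-Analysis.Analysis"
begin

definition int_Q_affine :: "((real^'n) \<Rightarrow> real) \<Rightarrow> bool" where
  "int_Q_affine L \<longleftrightarrow>
     (\<exists>m::real^'n. \<exists>\<gamma>::real. (\<forall>i. m $ i \<in> \<int>) \<and> \<gamma> \<in> \<rat> \<and> L = (\<lambda>u. inner m u + \<gamma>))"

definition aff_fun :: "((real^'n) \<Rightarrow> real) \<Rightarrow> bool" where
  "aff_fun L \<longleftrightarrow> (\<exists>m::real^'n. \<exists>c::real. L = (\<lambda>u. inner m u + c))"

definition int_Q_polyhedron :: "(real^'n) set \<Rightarrow> bool" where
  "int_Q_polyhedron P \<longleftrightarrow>
     (\<exists>S. finite S \<and> (\<forall>L\<in>S. int_Q_affine L) \<and> P = {u. \<forall>L\<in>S. L u \<ge> 0})"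

definition int_Q_complex :: "(real^'n) set set \<Rightarrow> bool" where
  "int_Q_complex \<Sigma> \<longleftrightarrow>
     finite \<Sigma> \<and>
     (\<forall>\<sigma>\<in>\<Sigma>. int_Q_polyhedron \<sigma> \<and> \<sigma> \<noteq> {}) \<and>
     (\<forall>\<sigma>\<in>\<Sigma>. \<forall>F. F face_of \<sigma> \<and> F \<noteq> {} \<longrightarrow> F \<in> \<Sigma>) \<and>
     (\<forall>\<sigma>\<in>\<Sigma>. \<forall>\<tau>\<in>\<Sigma>. (\<sigma> \<inter> \<tau>) face_of \<sigma> \<and> (\<sigma> \<inter> \<tau>) face_of \<tau>)"

definition subcomplex :: "(real^'n) set set \<Rightarrow> (real^'n) set set \<Rightarrow> bool" where
  "subcomplex \<Sigma>' \<Sigma> \<longleftrightarrow> \<Sigma>' \<subseteq> \<Sigma> \<and> int_Q_complex \<Sigma>'"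

definition facewise_affine :: "(real^'n) set set \<Rightarrow> ((real^'n) \<Rightarrow> real) \<Rightarrow> bool" where
  "facewise_affine \<Sigma> F \<longleftrightarrow> (\<forall>\<sigma>\<in>\<Sigma>. \<exists>L. aff_fun L \<and> (\<forall>u\<in>\<sigma>. F u = L u))"

definition facewise_int_Q_affine :: "(real^'n) set set \<Rightarrow> ((real^'n) \<Rightarrow> real) \<Rightarrow> bool" where
  "facewise_int_Q_affine \<Sigma> F \<longleftrightarrow> (\<forall>\<sigma>\<in>\<Sigma>. \<exists>L. int_Q_affine L \<and> (\<forall>u\<in>\<sigma>. F u = L u))"

definition parallel_rays_same_slope :: "(real^'n) set set \<Rightarrow> ((real^'n) \<Rightarrow> real) \<Rightarrow> bool" where
  "parallel_rays_same_slope \<Sigma> F \<longleftrightarrow>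
     (\<forall>\<sigma>\<in>\<Sigma>. \<forall>\<tau>\<in>\<Sigma>. \<forall>p q v.
        aff_dim \<sigma> = 1 \<and> aff_dim \<tau> = 1 \<and> v \<noteq> 0 \<and>
        (\<forall>t::real. t \<ge> 0 \<longrightarrow> p + t *\<^sub>R v \<in> \<sigma>) \<and>
        (\<forall>t::real. t \<ge> 0 \<longrightarrow> q + t *\<^sub>R v \<in> \<tau>) \<longrightarrow>
        (\<forall>t::real. t \<ge> 0 \<longrightarrow> F (p + t *\<^sub>R v) - F p = F (q + t *\<^sub>R v) - F q))"

text \<open>Finite (real-valued) members of Rat(Sigma); the extra element infinity is omitted,
  since all functions in the statement are real-valued.\<close>
definition in_Rat :: "(real^'n) set set \<Rightarrow> ((real^'n) \<Rightarrow> real) \<Rightarrow> bool" where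
  "in_Rat \<Sigma> F \<longleftrightarrow> facewise_int_Q_affine \<Sigma> F \<and> parallel_rays_same_slope \<Sigma> F"

definition strictly_convex_on_complex :: "(real^'n) set set \<Rightarrow> ((real^'n) \<Rightarrow> real) \<Rightarrow> bool" where
  "strictly_convex_on_complex \<Sigma> H \<longleftrightarrow>
     facewise_affine \<Sigma> H \<and>
     (\<forall>\<sigma>\<in>\<Sigma>. \<exists>L. aff_fun L \<and> (\<forall>u\<in>\<sigma>. H u = L u) \<and>
        (\<forall>\<eta>\<in>\<Sigma>. \<sigma> \<subseteq> \<eta> \<longrightarrow> (\<forall>u\<in>\<eta> - \<sigma>. H u - L u > 0)))"

end

theory Submission imports Defs begin

lemma farkas_aff:
  fixes A :: "((real^'n) \<times> real) set" and a p :: "real^'n" and b :: real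
  assumes fin: "finite A" and pA: "\<forall>(m,c)\<in>A. inner m p + c \<ge> 0"
    and imp: "\<forall>u. (\<forall>(m,c)\<in>A. inner m u + c \<ge> 0) \<longrightarrow> inner a u + b \<ge> 0"
  shows "(a,b) \<in> convex_cone hull (insert (0,1) A)"
proof (rule ccontr)
  let ?K = "convex_cone hull (insert (0::real^'n,1::real) A)"
  assume nin: "(a,b) \<notin> ?K"
  have cl: "closed ?K" using fin by (simp add: closed_convex_cone_hull)
  have cv: "convex ?K" by (rule convex_convex_cone_hull)
  obtain y \<beta> where y1: "inner y (a,b) < \<beta>" and y2: "\<forall>k\<in>?K. inner y k > \<beta>"
    using separating_hyperplane_closed_point[OF cv cl nin] by blast
  have cc: "convex_cone ?K" by (rule convex_cone_convex_cone_hull)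
  have b0: "\<beta> < 0" using y2 convex_cone_hull_contains_0 by fastforce
  have nn: "inner y k \<ge> 0" if k: "k \<in> ?K" for k
  proof (rule ccontr)
    assume "\<not> inner y k \<ge> 0"
    hence neg: "inner y k < 0" by simp
    define t where "t = \<beta> / inner y k"
    have t0: "t \<ge> 0" using neg b0 unfolding t_def by (simp add: divide_nonpos_neg)
    have "t *\<^sub>R k \<in> ?K" using convex_cone_scaleR[OF cc t0 k] .
    hence "inner y (t *\<^sub>R k) > \<beta>" using y2 by blast
    moreover have "inner y (t *\<^sub>R k) = \<beta>" using neg unfolding t_def by simp
    ultimately show False by simp
  qed
  obtain x t where yxt: "y = (x,t)" by (cases y)
  have sub: "insert (0,1) A \<subseteq> ?K" by (rule hull_subset)
  have t0: "t \<ge> 0" using nn[of "(0,1)"] sub yxt by auto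
  have cA: "inner x m + t * c \<ge> 0" if "(m,c) \<in> A" for m c
    using nn[of "(m,c)"] sub that yxt by auto
  have ab: "inner x a + t * b < 0" using y1 b0 yxt by auto
  show False
  proof (cases "t > 0")
    case True
    define u where "u = (1/t) *\<^sub>R x"
    have "\<forall>(m,c)\<in>A. inner m u + c \<ge> 0"
    proof (clarify)
      fix m c assume mc: "(m,c) \<in> A"
      have "inner m u + c = (inner x m + t * c) / t" using True
        unfolding u_def by (simp add: inner_commute field_simps)
      thus "inner m u + c \<ge> 0" using cA[OF mc] True by simp
    qed
    hence "inner a u + b \<ge> 0" using imp by blast
    moreover have "inner a u + b = (inner x a + t * b) / t" using True
        unfolding u_def by (simp add: inner_commute field_simps)
    ultimately show False using ab True by (simp add: zero_le_divide_iff)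
  next
    case False
    hence t: "t = 0" using t0 by simp
    have cA0: "inner x m \<ge> 0" if "(m,c) \<in> A" for m c using cA[OF that] t by simp
    have ax: "inner x a < 0" using ab t by simp
    define s where "s = (\<bar>inner a p + b\<bar> + 1) / (- inner x a)"
    have s0: "s \<ge> 0" using ax unfolding s_def by (intro divide_nonneg_pos) auto
    define u where "u = p + s *\<^sub>R x"
    have "\<forall>(m,c)\<in>A. inner m u + c \<ge> 0"
    proof (clarify)
      fix m c assume mc: "(m,c) \<in> A"
      have "inner m u + c = (inner m p + c) + s * inner x m"
        unfolding u_def by (simp add: inner_add_right inner_commute)
      moreover have "inner m p + c \<ge> 0" using pA mc by blast
      moreover have "s * inner x m \<ge> 0" using s0 cA0[OF mc] by simp
      ultimately show "inner m u + c \<ge> 0" by simp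
    qed
    hence "inner a u + b \<ge> 0" using imp by blast
    moreover have "inner a u + b = (inner a p + b) + s * inner x a"
      unfolding u_def by (simp add: inner_add_right inner_commute)
    moreover have "s * inner x a = - (\<bar>inner a p + b\<bar> + 1)"
      using ax unfolding s_def by (simp add: field_simps)
    ultimately show False by simp
  qed
qed


lemma key:
  fixes \<eta> \<sigma> :: "(real^'n) set" and g h :: "real^'n \<Rightarrow> real"
  assumes fS: "finite S" and aS: "\<forall>L\<in>S. aff_fun L" and eta: "\<eta> = {u. \<forall>L\<in>S. L u \<ge> 0}"
    and sub: "\<sigma> \<subseteq> \<eta>" and ne: "\<sigma> \<noteq> {}" and ag: "aff_fun g" and ah: "aff_fun h"
    and g0: "\<forall>u\<in>\<sigma>. g u \<ge> 0" and h0: "\<forall>u\<in>\<sigma>. h u = 0" and hp: "\<forall>u\<in>\<eta>-\<sigma>. h u > 0"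
  shows "\<exists>\<nu>\<ge>0. \<forall>u\<in>\<eta>. g u + \<nu> * h u \<ge> 0"
proof -
  obtain r where r: "\<forall>L\<in>S. L = (\<lambda>u. inner (fst (r L)) u + snd (r L))"
  proof -
    have "\<forall>L\<in>S. \<exists>mc. L = (\<lambda>u. inner (fst mc) u + snd mc)"
      using aS unfolding aff_fun_def by force
    then show ?thesis using that by metis
  qed
  obtain ag bg where gdef: "g = (\<lambda>u. inner ag u + bg)" using ag unfolding aff_fun_def by blast
  obtain ah bh where hdef: "h = (\<lambda>u. inner ah u + bh)" using ah unfolding aff_fun_def by blast
  define A where "A = insert (-ah, -bh) (r ` S)"
  have fA: "finite A" unfolding A_def using fS by simp
  have Aiff: "(\<forall>(m,c)\<in>A. inner m u + c \<ge> 0) \<longleftrightarrow> u \<in> \<eta> \<and> h u \<le> 0" for u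
  proof -
    have "(\<forall>(m,c)\<in>r ` S. inner m u + c \<ge> 0) \<longleftrightarrow> (\<forall>L\<in>S. L u \<ge> 0)"
      using r by (auto simp: split_beta) (metis)+
    moreover have "(inner (-ah) u + - bh \<ge> 0) \<longleftrightarrow> h u \<le> 0" by (simp add: hdef) linarith
    ultimately show ?thesis unfolding A_def eta by auto
  qed
  have sig: "(\<forall>(m,c)\<in>A. inner m u + c \<ge> 0) \<longleftrightarrow> u \<in> \<sigma>" for u
    using Aiff[of u] sub h0 hp by force
  obtain p where p: "p \<in> \<sigma>" using ne by blast
  have "(ag,bg) \<in> convex_cone hull (insert (0,1) A)"
    by (rule farkas_aff[OF fA, of p]) (use sig p g0 gdef in auto)
  moreover
  define Q where "Q = {(a', b'::real). \<exists>\<nu>\<ge>0. \<forall>u\<in>\<eta>. inner a' u + b' + \<nu> * h u \<ge> 0}"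
  have hnn: "\<forall>u\<in>\<eta>. h u \<ge> 0" using hp h0 by (metis Diff_iff less_eq_real_def order_refl)
  have "convex_cone hull (insert (0,1) A) \<subseteq> Q"
  proof (rule hull_minimal)
    show "insert (0, 1) A \<subseteq> Q"
    proof
      fix k assume k: "k \<in> insert (0,1) A"
      obtain m c where kmc: "k = (m,c)" by (cases k)
      show "k \<in> Q"
      proof (cases "k = (-ah,-bh)")
        case True
        then show ?thesis unfolding Q_def by (auto intro!: exI[of _ 1] simp: hdef)
      next
        case False
        have "\<forall>u\<in>\<eta>. inner m u + c \<ge> 0"
        proof
          fix u assume u: "u \<in> \<eta>"
          show "inner m u + c \<ge> 0"
          proof (cases "k = (0,1)")
            case True then show ?thesis using kmc by simp
          next
            case F2: False
            then have "k \<in> r ` S" using k False unfolding A_def by auto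
            then obtain L where L: "L \<in> S" "k = r L" by blast
            have "L u \<ge> 0" using u L eta by blast
            then show ?thesis using r L kmc by (metis fst_conv snd_conv)
          qed
        qed
        then show ?thesis unfolding Q_def kmc by (auto intro!: exI[of _ 0])
      qed
    qed
    show "convex_cone Q" unfolding convex_cone_iff
    proof (intro conjI ballI allI impI)
      show "0 \<in> Q" unfolding Q_def by (auto intro!: exI[of _ 0] simp: zero_prod_def)
    next
      fix x y assume x: "x \<in> Q" and y: "y \<in> Q"
      obtain a1 b1 a2 b2 where xy: "x = (a1,b1)" "y = (a2,b2)" by (cases x, cases y)
      obtain n1 where n1: "n1 \<ge> 0" "\<forall>u\<in>\<eta>. inner a1 u + b1 + n1 * h u \<ge> 0" using x xy Q_def by auto
      obtain n2 where n2: "n2 \<ge> 0" "\<forall>u\<in>\<eta>. inner a2 u + b2 + n2 * h u \<ge> 0" using y xy Q_def by auto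
      have "\<forall>u\<in>\<eta>. inner (a1+a2) u + (b1+b2) + (n1+n2) * h u \<ge> 0"
        using n1 n2 by (auto simp: inner_add_left algebra_simps) (smt (verit))
      then show "x + y \<in> Q" unfolding Q_def xy using n1 n2 by (auto intro!: exI[of _ "n1+n2"])
    next
      fix x and c :: real assume x: "x \<in> Q" and c: "c \<ge> 0"
      obtain a1 b1 where xy: "x = (a1,b1)" by (cases x)
      obtain n1 where n1: "n1 \<ge> 0" "\<forall>u\<in>\<eta>. inner a1 u + b1 + n1 * h u \<ge> 0" using x xy Q_def by auto
      have "\<forall>u\<in>\<eta>. inner (c *\<^sub>R a1) u + c * b1 + (c * n1) * h u \<ge> 0"
      proof
        fix u assume "u \<in> \<eta>"
        hence "c * (inner a1 u + b1 + n1 * h u) \<ge> 0" using n1 c by simp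
        thus "inner (c *\<^sub>R a1) u + c * b1 + (c * n1) * h u \<ge> 0" by (simp add: algebra_simps)
      qed
      then show "c *\<^sub>R x \<in> Q" unfolding Q_def xy using n1 c by (auto intro!: exI[of _ "c*n1"])
    qed
  qed
  ultimately have "(ag,bg) \<in> Q" by blast
  then show ?thesis unfolding Q_def gdef by auto
qed


lemma aff_fun_diff: "aff_fun f \<Longrightarrow> aff_fun g \<Longrightarrow> aff_fun (\<lambda>u. f u - g u)"
proof -
  assume "aff_fun f" "aff_fun g"
  then obtain m c m' c' where "f = (\<lambda>u. inner m u + c)" "g = (\<lambda>u. inner m' u + c')"
    unfolding aff_fun_def by blast
  then show ?thesis unfolding aff_fun_def
    by (intro exI[of _ "m - m'"] exI[of _ "c - c'"]) (auto simp: inner_diff_left)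
qed

lemma aff_fun_add: "aff_fun f \<Longrightarrow> aff_fun g \<Longrightarrow> aff_fun (\<lambda>u. f u + g u)"
proof -
  assume "aff_fun f" "aff_fun g"
  then obtain m c m' c' where "f = (\<lambda>u. inner m u + c)" "g = (\<lambda>u. inner m' u + c')"
    unfolding aff_fun_def by blast
  then show ?thesis unfolding aff_fun_def
    by (intro exI[of _ "m + m'"] exI[of _ "c + c'"]) (auto simp: inner_add_left)
qed

lemma aff_fun_scale: "aff_fun f \<Longrightarrow> aff_fun (\<lambda>u. a * f u)"
proof -
  assume "aff_fun f"
  then obtain m c where "f = (\<lambda>u. inner m u + c)" unfolding aff_fun_def by blast
  then show ?thesis unfolding aff_fun_def
    by (intro exI[of _ "a *\<^sub>R m"] exI[of _ "a * c"]) (auto simp: algebra_simps)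
qed

lemma int_Q_aff: "int_Q_affine f \<Longrightarrow> aff_fun f"
  unfolding aff_fun_def int_Q_affine_def by blast

lemma int_Q_affine_add: "int_Q_affine f \<Longrightarrow> int_Q_affine g \<Longrightarrow> int_Q_affine (\<lambda>u. f u + g u)"
proof -
  assume "int_Q_affine f" "int_Q_affine g"
  then obtain m c m' c' where "f = (\<lambda>u. inner m u + c)" "g = (\<lambda>u. inner m' u + c')"
    "\<forall>i. m $ i \<in> \<int>" "\<forall>i. m' $ i \<in> \<int>" "c \<in> \<rat>" "c' \<in> \<rat>"
    unfolding int_Q_affine_def by blast
  then show ?thesis unfolding int_Q_affine_def
    by (intro exI[of _ "m + m'"] exI[of _ "c + c'"]) (auto simp: inner_add_left)
qed

lemma int_Q_affine_scale: "int_Q_affine f \<Longrightarrow> int_Q_affine (\<lambda>u. real (k::nat) * f u)"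
proof -
  assume "int_Q_affine f"
  then obtain m c where "f = (\<lambda>u. inner m u + c)" "\<forall>i. m $ i \<in> \<int>" "c \<in> \<rat>"
    unfolding int_Q_affine_def by blast
  then show ?thesis unfolding int_Q_affine_def
    by (intro exI[of _ "real k *\<^sub>R m"] exI[of _ "real k * c"]) (auto simp: algebra_simps)
qed


theorem proposition5p3:
  fixes \<Sigma>h \<Sigma>' :: "(real^'n) set set"
    and Hh F :: "(real^'n) \<Rightarrow> real"
  assumes "int_Q_complex \<Sigma>h"
    and "\<Union>\<Sigma>h = UNIV"
    and "in_Rat \<Sigma>h Hh"
    and "strictly_convex_on_complex \<Sigma>h Hh"
    and "subcomplex \<Sigma>' \<Sigma>h"
    and "facewise_affine \<Sigma>h F"
  shows "\<exists>H1 H2. strictly_convex_on_complex \<Sigma>h H1 \<and> strictly_convex_on_complex \<Sigma>h H2 \<and>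
           (\<forall>u. F u = H1 u - H2 u) \<and>
           (in_Rat \<Sigma>' F \<longrightarrow> in_Rat \<Sigma>' H1 \<and> in_Rat \<Sigma>' H2)"
proof -
  have finS: "finite \<Sigma>h" and poly: "\<forall>\<sigma>\<in>\<Sigma>h. int_Q_polyhedron \<sigma> \<and> \<sigma> \<noteq> {}"
    using assms(1) unfolding int_Q_complex_def by blast+
  have "\<forall>\<sigma>\<in>\<Sigma>h. \<exists>L. aff_fun L \<and> (\<forall>u\<in>\<sigma>. F u = L u)"
    using assms(6) unfolding facewise_affine_def by blast
  from bchoice[OF this] obtain FL where FL: "\<forall>\<sigma>\<in>\<Sigma>h. aff_fun (FL \<sigma>) \<and> (\<forall>u\<in>\<sigma>. F u = FL \<sigma> u)"
    by blast
  have "\<forall>\<sigma>\<in>\<Sigma>h. \<exists>L. aff_fun L \<and> (\<forall>u\<in>\<sigma>. Hh u = L u)"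
    using assms(4) unfolding strictly_convex_on_complex_def facewise_affine_def by blast
  from bchoice[OF this] obtain HA where HA: "\<forall>\<sigma>\<in>\<Sigma>h. aff_fun (HA \<sigma>) \<and> (\<forall>u\<in>\<sigma>. Hh u = HA \<sigma> u)"
    by blast
  obtain HL where HL: "\<forall>\<sigma>\<in>\<Sigma>h. aff_fun (HL \<sigma>) \<and> (\<forall>u\<in>\<sigma>. Hh u = HL \<sigma> u) \<and>
        (\<forall>\<eta>\<in>\<Sigma>h. \<sigma> \<subseteq> \<eta> \<longrightarrow> (\<forall>u\<in>\<eta> - \<sigma>. Hh u - HL \<sigma> u > 0))"
  proof -
    have "\<forall>\<sigma>\<in>\<Sigma>h. \<exists>L. aff_fun L \<and> (\<forall>u\<in>\<sigma>. Hh u = L u) \<and>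
        (\<forall>\<eta>\<in>\<Sigma>h. \<sigma> \<subseteq> \<eta> \<longrightarrow> (\<forall>u\<in>\<eta> - \<sigma>. Hh u - L u > 0))"
      using assms(4) unfolding strictly_convex_on_complex_def by (rule conjunct2)
    from bchoice[OF this] show ?thesis using that by blast
  qed
  define P where "P = {(\<sigma>,\<eta>). \<sigma> \<in> \<Sigma>h \<and> \<eta> \<in> \<Sigma>h \<and> \<sigma> \<subseteq> \<eta>}"
  have finP: "finite P" unfolding P_def
    by (rule finite_subset[of _ "\<Sigma>h \<times> \<Sigma>h"]) (use finS in auto)
  have pair: "\<exists>\<nu>\<ge>0. \<forall>u\<in>\<eta>. (FL \<eta> u - FL \<sigma> u) + \<nu> * (HA \<eta> u - HL \<sigma> u) \<ge> 0"
    if pr: "pr \<in> P" "pr = (\<sigma>, \<eta>)" for pr \<sigma> \<eta>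
  proof -
    have s: "\<sigma> \<in> \<Sigma>h" "\<eta> \<in> \<Sigma>h" "\<sigma> \<subseteq> \<eta>" using pr unfolding P_def by simp_all
    have "int_Q_polyhedron \<eta>" using poly s(2) by simp
    then obtain S where S: "finite S" "\<forall>L\<in>S. int_Q_affine L" "\<eta> = {u. \<forall>L\<in>S. L u \<ge> 0}"
      unfolding int_Q_polyhedron_def by blast
    show ?thesis
    proof (rule key[OF S(1) _ S(3) s(3)])
      show "\<forall>L\<in>S. aff_fun L" using S(2) int_Q_aff by auto
      show "\<sigma> \<noteq> {}" using poly s(1) by blast
      show "aff_fun (\<lambda>u. FL \<eta> u - FL \<sigma> u)" by (rule aff_fun_diff) (use FL s in auto)
      show "aff_fun (\<lambda>u. HA \<eta> u - HL \<sigma> u)" by (rule aff_fun_diff) (use HA HL s in auto)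
      have F1: "\<forall>u\<in>\<eta>. F u = FL \<eta> u" "\<forall>u\<in>\<sigma>. F u = FL \<sigma> u" using FL s(1,2) by auto
      have H1a: "\<forall>u\<in>\<eta>. Hh u = HA \<eta> u" using HA s(2) by blast
      have H1b: "\<forall>u\<in>\<sigma>. Hh u = HL \<sigma> u" using HL s(1) by blast
      have H1c: "\<forall>u\<in>\<eta> - \<sigma>. Hh u - HL \<sigma> u > 0" using HL s by blast
      note H1 = H1a H1b H1c
      show "\<forall>u\<in>\<sigma>. 0 \<le> FL \<eta> u - FL \<sigma> u"
      proof
        fix u assume u: "u \<in> \<sigma>"
        then have "u \<in> \<eta>" using s(3) by blast
        then show "0 \<le> FL \<eta> u - FL \<sigma> u" using F1 u by force
      qed
      show "\<forall>u\<in>\<sigma>. HA \<eta> u - HL \<sigma> u = 0"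
      proof
        fix u assume u: "u \<in> \<sigma>"
        then have "u \<in> \<eta>" using s(3) by blast
        then show "HA \<eta> u - HL \<sigma> u = 0" using H1a H1b u by force
      qed
      show "\<forall>u\<in>\<eta> - \<sigma>. 0 < HA \<eta> u - HL \<sigma> u" using H1 by auto
    qed
  qed
  obtain \<nu> where \<nu>: "\<forall>pr\<in>P. \<nu> pr \<ge> 0 \<and> (\<forall>u\<in>snd pr. (FL (snd pr) u - FL (fst pr) u)
       + \<nu> pr * (HA (snd pr) u - HL (fst pr) u) \<ge> 0)"
  proof -
    have "\<forall>pr\<in>P. \<exists>v. v \<ge> 0 \<and> (\<forall>u\<in>snd pr. (FL (snd pr) u - FL (fst pr) u)
       + v * (HA (snd pr) u - HL (fst pr) u) \<ge> 0)"
      using pair by auto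
    from bchoice[OF this] show ?thesis using that by blast
  qed
  define M where "M = Max (insert 0 (\<nu> ` P))"
  define c :: nat where "c = nat \<lceil>M\<rceil> + 1"
  have cgt: "real c > \<nu> pr" if "pr \<in> P" for pr
  proof -
    have "\<nu> pr \<le> M" unfolding M_def using finP that by (intro Max_ge) auto
    moreover have "M \<le> real (nat \<lceil>M\<rceil>)" by linarith
    ultimately show ?thesis unfolding c_def by simp
  qed
  have c1: "real c \<ge> 1" unfolding c_def by simp
  define H1 where "H1 = (\<lambda>u. F u + real c * Hh u)"
  define H2 where "H2 = (\<lambda>u. real c * Hh u)"
  have sc2: "strictly_convex_on_complex \<Sigma>h H2"
    unfolding strictly_convex_on_complex_def facewise_affine_def
  proof (intro conjI ballI)
    fix \<sigma> assume s: "\<sigma> \<in> \<Sigma>h"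
    show "\<exists>L. aff_fun L \<and> (\<forall>u\<in>\<sigma>. H2 u = L u)"
      unfolding H2_def
      by (rule exI[of _ "\<lambda>u. real c * HA \<sigma> u"]) (use HA s aff_fun_scale in auto)
    show "\<exists>L. aff_fun L \<and> (\<forall>u\<in>\<sigma>. H2 u = L u) \<and>
        (\<forall>\<eta>\<in>\<Sigma>h. \<sigma> \<subseteq> \<eta> \<longrightarrow> (\<forall>u\<in>\<eta> - \<sigma>. H2 u - L u > 0))"
    proof (intro exI[of _ "\<lambda>u. real c * HL \<sigma> u"] conjI ballI impI)
      show "aff_fun (\<lambda>u. real c * HL \<sigma> u)" by (intro aff_fun_scale) (use HL s in auto)
      show "H2 u = real c * HL \<sigma> u" if "u \<in> \<sigma>" for u using HL s that unfolding H2_def by simp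
      fix \<eta> u assume e: "\<eta> \<in> \<Sigma>h" "\<sigma> \<subseteq> \<eta>" "u \<in> \<eta> - \<sigma>"
      have "Hh u - HL \<sigma> u > 0" using HL s e by blast
      hence "real c * (Hh u - HL \<sigma> u) > 0" using c1 by simp
      thus "H2 u - real c * HL \<sigma> u > 0" unfolding H2_def by (simp add: algebra_simps)
    qed
  qed
  have sc1: "strictly_convex_on_complex \<Sigma>h H1"
    unfolding strictly_convex_on_complex_def facewise_affine_def
  proof (intro conjI ballI)
    fix \<sigma> assume s: "\<sigma> \<in> \<Sigma>h"
    show "\<exists>L. aff_fun L \<and> (\<forall>u\<in>\<sigma>. H1 u = L u)"
      unfolding H1_def
    proof (intro exI[of _ "\<lambda>u. FL \<sigma> u + real c * HA \<sigma> u"] conjI)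
      show "aff_fun (\<lambda>u. FL \<sigma> u + real c * HA \<sigma> u)"
        by (intro aff_fun_add aff_fun_scale) (use HA FL s in auto)
      show "\<forall>u\<in>\<sigma>. F u + real c * Hh u = FL \<sigma> u + real c * HA \<sigma> u" using HA FL s by simp
    qed
    show "\<exists>L. aff_fun L \<and> (\<forall>u\<in>\<sigma>. H1 u = L u) \<and>
        (\<forall>\<eta>\<in>\<Sigma>h. \<sigma> \<subseteq> \<eta> \<longrightarrow> (\<forall>u\<in>\<eta> - \<sigma>. H1 u - L u > 0))"
    proof (intro exI[of _ "\<lambda>u. FL \<sigma> u + real c * HL \<sigma> u"] conjI ballI impI)
      show "aff_fun (\<lambda>u. FL \<sigma> u + real c * HL \<sigma> u)"
        by (intro aff_fun_add aff_fun_scale) (use HL FL s in auto)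
      show "H1 u = FL \<sigma> u + real c * HL \<sigma> u" if "u \<in> \<sigma>" for u
        using HL FL s that unfolding H1_def by simp
      fix \<eta> u assume e: "\<eta> \<in> \<Sigma>h" "\<sigma> \<subseteq> \<eta>" "u \<in> \<eta> - \<sigma>"
      have pP: "(\<sigma>,\<eta>) \<in> P" using s e unfolding P_def by auto
      have hpos: "Hh u - HL \<sigma> u > 0" using HL s e by blast
      have Fu: "F u = FL \<eta> u" and Hu: "Hh u = HA \<eta> u" using FL HA e by auto
      have nu: "(F u - FL \<sigma> u) + \<nu> (\<sigma>,\<eta>) * (Hh u - HL \<sigma> u) \<ge> 0"
        using \<nu> pP e Fu Hu by fastforce
      have "(real c - \<nu> (\<sigma>,\<eta>)) * (Hh u - HL \<sigma> u) > 0"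
        using cgt[OF pP] hpos by simp
      hence "(F u - FL \<sigma> u) + real c * (Hh u - HL \<sigma> u) > 0" using nu
        by (simp add: algebra_simps)
      thus "H1 u - (FL \<sigma> u + real c * HL \<sigma> u) > 0" unfolding H1_def by (simp add: algebra_simps)
    qed
  qed
  have rat: "in_Rat \<Sigma>' H1 \<and> in_Rat \<Sigma>' H2" if FR: "in_Rat \<Sigma>' F"
  proof -
    have sub: "\<Sigma>' \<subseteq> \<Sigma>h" using assms(5) unfolding subcomplex_def by blast
    have HR0: "facewise_int_Q_affine \<Sigma>h Hh" "parallel_rays_same_slope \<Sigma>h Hh"
      using assms(3) unfolding in_Rat_def by auto
    have HR1: "facewise_int_Q_affine \<Sigma>' Hh"
      using HR0(1) sub unfolding facewise_int_Q_affine_def by blast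
    have HR2: "parallel_rays_same_slope \<Sigma>' Hh"
      using HR0(2) sub unfolding parallel_rays_same_slope_def by (meson subsetD)
    note HR = HR1 HR2
    have FR': "facewise_int_Q_affine \<Sigma>' F" "parallel_rays_same_slope \<Sigma>' F"
      using FR unfolding in_Rat_def by auto
    have f2: "facewise_int_Q_affine \<Sigma>' H2"
      using HR(1) int_Q_affine_scale unfolding facewise_int_Q_affine_def H2_def by fastforce
    have f1: "facewise_int_Q_affine \<Sigma>' H1"
      unfolding facewise_int_Q_affine_def H1_def
    proof
      fix \<sigma> assume "\<sigma> \<in> \<Sigma>'"
      then obtain L1 L2 where "int_Q_affine L1" "\<forall>u\<in>\<sigma>. F u = L1 u"
        "int_Q_affine L2" "\<forall>u\<in>\<sigma>. Hh u = L2 u"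
        using HR(1) FR'(1) unfolding facewise_int_Q_affine_def by meson
      then show "\<exists>L. int_Q_affine L \<and> (\<forall>u\<in>\<sigma>. F u + real c * Hh u = L u)"
        by (intro exI[of _ "\<lambda>u. L1 u + real c * L2 u"])
           (auto intro: int_Q_affine_add int_Q_affine_scale)
    qed
    have p2: "parallel_rays_same_slope \<Sigma>' H2"
      unfolding parallel_rays_same_slope_def H2_def
    proof (intro ballI allI impI)
      fix \<sigma> \<tau> p q v and t :: real
      assume a: "\<sigma> \<in> \<Sigma>'" "\<tau> \<in> \<Sigma>'"
        "aff_dim \<sigma> = 1 \<and> aff_dim \<tau> = 1 \<and> v \<noteq> 0 \<and> (\<forall>t\<ge>0. p + t *\<^sub>R v \<in> \<sigma>) \<and> (\<forall>t\<ge>0. q + t *\<^sub>R v \<in> \<tau>)"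
        "0 \<le> t"
      have 2: "Hh (p + t *\<^sub>R v) - Hh p = Hh (q + t *\<^sub>R v) - Hh q"
        using HR(2) a unfolding parallel_rays_same_slope_def by blast
      show "real c * Hh (p + t *\<^sub>R v) - real c * Hh p = real c * Hh (q + t *\<^sub>R v) - real c * Hh q"
        using 2 by (simp flip: right_diff_distrib)
    qed
    have p1: "parallel_rays_same_slope \<Sigma>' H1"
      unfolding parallel_rays_same_slope_def H1_def
    proof (intro ballI allI impI)
      fix \<sigma> \<tau> p q v and t :: real
      assume a: "\<sigma> \<in> \<Sigma>'" "\<tau> \<in> \<Sigma>'"
        "aff_dim \<sigma> = 1 \<and> aff_dim \<tau> = 1 \<and> v \<noteq> 0 \<and> (\<forall>t\<ge>0. p + t *\<^sub>R v \<in> \<sigma>) \<and> (\<forall>t\<ge>0. q + t *\<^sub>R v \<in> \<tau>)"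
        "0 \<le> t"
      have 1: "F (p + t *\<^sub>R v) - F p = F (q + t *\<^sub>R v) - F q"
        using FR'(2) a unfolding parallel_rays_same_slope_def by blast
      have 2: "Hh (p + t *\<^sub>R v) - Hh p = Hh (q + t *\<^sub>R v) - Hh q"
        using HR(2) a unfolding parallel_rays_same_slope_def by blast
      have "real c * (Hh (p + t *\<^sub>R v) - Hh p) = real c * (Hh (q + t *\<^sub>R v) - Hh q)"
        using 2 by simp
      then show "F (p + t *\<^sub>R v) + real c * Hh (p + t *\<^sub>R v) - (F p + real c * Hh p) =
          F (q + t *\<^sub>R v) + real c * Hh (q + t *\<^sub>R v) - (F q + real c * Hh q)"
        using 1 by (simp add: algebra_simps)
    qed
    show ?thesis using f1 f2 p1 p2 unfolding in_Rat_def by simp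
  qed
  show ?thesis
    by (rule exI[of _ H1], rule exI[of _ H2]) (use sc1 sc2 rat in \<open>auto simp: H1_def H2_def\<close>)
qed

end
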